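(* Let $0<\mu<L_{\max}^{-1}$ with $L_{\max}=\max_i\|A_i\|_2^2$, let $\{x^n\}$ be generated by GAITA (as in the context) from an arbitrary $x^0\in\mathbf{R}^N$, and suppose $\{x^n\}$ converges to $x^*$. Let $I=Supp(x^* )$ and $K=\|x^*\|_0=|I|$. If $$A_I^TA_I+\lambda q(q-1)\Lambda(x_I^* )\succ0,$$ then $x^*$ is a strict local minimizer of $T_\lambda$.
   Context: Let $A\in\mathbf{R}^{m\times N}$ have columns $A_1,\dots,A_N$, $y\in\mathbf{R}^m$, $\lambda>0$, $q\in(0,1)$, and $T_\lambda(x)=\frac12\|Ax-y\|_2^2+\lambda\sum_{i=1}^N|x_i|^q$. For a step size $\mu>0$ set $\tau_{\mu,q}=\frac{2-q}{2-2q}(2\lambda\mu(1-q))^{\frac{1}{2-q}}$ and $\eta_{\mu,q}=(2\lambda\mu(1-q))^{\frac{1}{2-q}}$. For $z\in\mathbf{R}$ let $prox_{\mu,\lambda|\cdot|^q}(z)=\arg\min_{v\in\mathbf{R}}\{\frac{(z-v)^2}{2\mu}+\lambda|v|^q\}$ (a single point when $|z|\neq\tau_{\mu,q}$). Define $\mathcal{T}(z,w)$ as the unique element of $prox_{\mu,\lambda|\cdot|^q}(z)$ if $|z|\neq\tau_{\mu,q}$, and, if $|z|=\tau_{\mu,q}$, as $sgn(z)\eta_{\mu,q}$ when $w\neq0$ and $0$ when $w=0$. GAITA: given $x^0\in\mathbf{R}^N$, for $n=0,1,2,\dots$ let $i=(n\bmod N)+1$, $z_i^n=x_i^n-\mu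 A_i^T(Ax^n-y)$, $x_i^{n+1}=\mathcal{T}(z_i^n,x_i^n)$, $x_j^{n+1}=x_j^n$ for $j\neq i$. $Supp(x)=\{i:x_i\neq0\}$. $A_I$ is the submatrix of $A$ with columns indexed by $I$, $x_I^*$ the subvector of $x^*$ indexed by $I$, $\Lambda(x_I^* )\in\mathbf{R}^{K\times K}$ the diagonal matrix with diagonal entries $|x_i^*|^{q-2}$, $i\in I$, and $M\succ0$ means $M$ is positive definite. *)

theory Defs
  imports "HOL-Analysis.Analysis"
begin

text \<open>Conventions: the matrix A in R^(m x N) is a function A :: nat => nat => real,
  entry (k,i) = A k i for k < m, i < N (0-based indices). Vectors in R^N / R^m are
  functions nat => real; only indices below N (resp. m) are meaningful.\<close>

definition Tlam :: "nat \<Rightarrow> nat \<Rightarrow> (nat \<Rightarrow> nat \<Rightarrow> real) \<Rightarrow> (nat \<Rightarrow> real) \<Rightarrow> real \<Rightarrow> real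
    \<Rightarrow> (nat \<Rightarrow> real) \<Rightarrow> real" where
  "Tlam m N A y lam q x =
     (1/2) * (\<Sum>k<m. ((\<Sum>j<N. A k j * x j) - y k)^2) + lam * (\<Sum>i<N. \<bar>x i\<bar> powr q)"

definition tau :: "real \<Rightarrow> real \<Rightarrow> real \<Rightarrow> real" where
  "tau mu lam q = (2 - q) / (2 - 2*q) * (2*lam*mu*(1-q)) powr (1/(2-q))"

definition eta :: "real \<Rightarrow> real \<Rightarrow> real \<Rightarrow> real" where
  "eta mu lam q = (2*lam*mu*(1-q)) powr (1/(2-q))"

definition prox :: "real \<Rightarrow> real \<Rightarrow> real \<Rightarrow> real \<Rightarrow> real set" where
  "prox mu lam q z = {v. \<forall>w. (z - v)^2 / (2*mu) + lam * \<bar>v\<bar> powr q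
                              \<le> (z - w)^2 / (2*mu) + lam * \<bar>w\<bar> powr q}"

definition Top :: "real \<Rightarrow> real \<Rightarrow> real \<Rightarrow> real \<Rightarrow> real \<Rightarrow> real" where
  "Top mu lam q z w =
     (if \<bar>z\<bar> \<noteq> tau mu lam q then (THE v. v \<in> prox mu lam q z)
      else if w \<noteq> 0 then sgn z * eta mu lam q else 0)"

primrec gaita :: "nat \<Rightarrow> nat \<Rightarrow> (nat \<Rightarrow> nat \<Rightarrow> real) \<Rightarrow> (nat \<Rightarrow> real) \<Rightarrow> real \<Rightarrow> real \<Rightarrow> real
    \<Rightarrow> (nat \<Rightarrow> real) \<Rightarrow> nat \<Rightarrow> (nat \<Rightarrow> real)" where
  "gaita m N A y mu lam q x0 0 = x0"
| "gaita m N A y mu lam q x0 (Suc n) =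
     (let x = gaita m N A y mu lam q x0 n; i = n mod N;
          z = x i - mu * (\<Sum>k<m. A k i * ((\<Sum>j<N. A k j * x j) - y k))
      in x(i := Top mu lam q z (x i)))"

definition Lmax :: "nat \<Rightarrow> nat \<Rightarrow> (nat \<Rightarrow> nat \<Rightarrow> real) \<Rightarrow> real" where
  "Lmax m N A = Max ((\<lambda>i. \<Sum>k<m. (A k i)^2) ` {..<N})"

definition supp :: "nat \<Rightarrow> (nat \<Rightarrow> real) \<Rightarrow> nat set" where
  "supp N x = {i. i < N \<and> x i \<noteq> 0}"

definition pos_def_on :: "nat set \<Rightarrow> (nat \<Rightarrow> nat \<Rightarrow> real) \<Rightarrow> bool" where
  "pos_def_on I M = (\<forall>v. (\<exists>i\<in>I. v i \<noteq> 0) \<longrightarrow> (\<Sum>i\<in>I. \<Sum>j\<in>I. v i * M i j * v j) > 0)"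

text \<open>Entries (i,j in I) of A_I^T A_I + lam q (q-1) Lambda(x_I).\<close>
definition hessI :: "nat \<Rightarrow> (nat \<Rightarrow> nat \<Rightarrow> real) \<Rightarrow> real \<Rightarrow> real \<Rightarrow> (nat \<Rightarrow> real) \<Rightarrow> nat \<Rightarrow> nat \<Rightarrow> real" where
  "hessI m A lam q xs i j = (\<Sum>k<m. A k i * A k j)
      + (if i = j then lam * q * (q - 1) * \<bar>xs i\<bar> powr (q - 2) else 0)"

definition strict_local_min :: "nat \<Rightarrow> ((nat \<Rightarrow> real) \<Rightarrow> real) \<Rightarrow> (nat \<Rightarrow> real) \<Rightarrow> bool" where
  "strict_local_min N f xs = (\<exists>\<delta>>0. \<forall>x.
      sqrt (\<Sum>i<N. (x i - xs i)^2) < \<delta> \<and> (\<exists>i<N. x i \<noteq> xs i) \<longrightarrow> f xs < f x)"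

end

theory Submission
  imports Defs
begin


lemma compact_sphere_fun:
  fixes I :: "nat set"
  assumes "finite I"
  shows "compact {v::nat\<Rightarrow>real. (\<forall>i. i \<notin> I \<longrightarrow> v i = 0) \<and> (\<Sum>i\<in>I. (v i)^2) = 1}"
proof -
  let ?B = "Pi\<^sub>E UNIV (\<lambda>i. if i \<in> I then {-1..1::real} else {0})"
  have cB: "compact ?B"
  proof -
    have "compactin (product_topology (\<lambda>i. euclidean) UNIV) ?B"
      by (subst compactin_PiE) auto
    thus ?thesis by (simp add: euclidean_product_topology)
  qed
  have cl1: "closed {v::nat\<Rightarrow>real. \<forall>i. i \<notin> I \<longrightarrow> v i = 0}"
  proof -
    have "{v::nat\<Rightarrow>real. \<forall>i. i \<notin> I \<longrightarrow> v i = 0} = (\<Inter>i\<in>-I. {v. v i = 0})" by auto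
    moreover have "closed {v::nat\<Rightarrow>real. v i = 0}" for i
      by (rule closed_Collect_eq) (simp_all add: continuous_on_const)
    ultimately show ?thesis by auto
  qed
  have cl2: "closed {v::nat\<Rightarrow>real. (\<Sum>i\<in>I. (v i)^2) = 1}"
    apply (rule closed_Collect_eq)
     apply (rule continuous_on_sum, rule continuous_on_power, rule continuous_on_product_coordinates)
    apply (rule continuous_on_const)
    done
  have sub: "{v::nat\<Rightarrow>real. (\<forall>i. i \<notin> I \<longrightarrow> v i = 0) \<and> (\<Sum>i\<in>I. (v i)^2) = 1} \<subseteq> ?B"
  proof
    fix v :: "nat\<Rightarrow>real" assume v: "v \<in> {v. (\<forall>i. i \<notin> I \<longrightarrow> v i = 0) \<and> (\<Sum>i\<in>I. (v i)^2) = 1}"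
    have "\<bar>v i\<bar> \<le> 1" if "i \<in> I" for i
    proof -
      have "(v i)^2 \<le> (\<Sum>i\<in>I. (v i)^2)" using that assms by (intro member_le_sum) auto
      hence "(v i)^2 \<le> 1^2" using v by simp
      thus ?thesis by (metis abs_le_square_iff abs_one)
    qed
    thus "v \<in> ?B" using v by (auto simp: PiE_iff abs_le_iff)
  qed
  have "{v::nat\<Rightarrow>real. (\<forall>i. i \<notin> I \<longrightarrow> v i = 0) \<and> (\<Sum>i\<in>I. (v i)^2) = 1} = ?B \<inter> ({v. \<forall>i. i \<notin> I \<longrightarrow> v i = 0} \<inter> {v. (\<Sum>i\<in>I. (v i)^2) = 1})"
    using sub by blast
  thus ?thesis using compact_Int_closed[OF cB closed_Int[OF cl1 cl2]] by simp
qed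



definition phi :: "real\<Rightarrow>real\<Rightarrow>real\<Rightarrow>real\<Rightarrow>real\<Rightarrow>real" where
  "phi mu lam q z v = (z - v)^2/(2*mu) + lam*\<bar>v\<bar> powr q"

lemma prox_iff: "v \<in> prox mu lam q z \<longleftrightarrow> (\<forall>w. phi mu lam q z v \<le> phi mu lam q z w)"
  by (simp add: prox_def phi_def)

lemma absp_deriv:
  assumes "v \<noteq> 0"
  shows "((\<lambda>u. \<bar>u\<bar> powr q) has_real_derivative q * (sgn v) * \<bar>v\<bar> powr (q-1)) (at v)"
proof (cases "v > 0")
  case True
  have "((\<lambda>u. u powr q) has_real_derivative q * v powr (q-1)) (at v)"
    using has_real_derivative_powr[OF True] by simp
  hence "((\<lambda>u. \<bar>u\<bar> powr q) has_real_derivative q * v powr (q-1)) (at v)"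
    by (rule has_field_derivative_transform_within_open[where S="{0<..}"]) (use True in auto)
  thus ?thesis using True by simp
next
  case False
  hence neg: "v < 0" using assms by simp
  have d: "((\<lambda>u. -u) has_real_derivative -1) (at v)" by (auto intro!: derivative_eq_intros)
  have "((\<lambda>u. (-u) powr q) has_real_derivative q * (-v) powr (q - of_nat 1) * (-1)) (at v)"
    using DERIV_fun_powr[OF d] neg by simp
  hence "((\<lambda>u. \<bar>u\<bar> powr q) has_real_derivative q * (-v) powr (q - of_nat 1) * (-1)) (at v)"
    by (rule has_field_derivative_transform_within_open[where S="{..<0}"]) (use neg in auto)
  thus ?thesis using neg by simp
qed

lemma phi_deriv:
  assumes "v \<noteq> 0"
  shows "((phi mu lam q z) has_real_derivative (v - z)/mu + lam*(q * (sgn v) *\<bar>v\<bar> powr (q-1))) (at v)"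
proof -
  have "((\<lambda>u. (z - u)^2/(2*mu) + lam*\<bar>u\<bar> powr q) has_real_derivative
      (of_nat 2 * ((0 - 1) * (z - v)^(2 - Suc 0)))/(2*mu) + lam*(q * (sgn v) *\<bar>v\<bar> powr (q-1))) (at v)"
    by (intro DERIV_add DERIV_cmult DERIV_cdivide DERIV_power DERIV_diff DERIV_const DERIV_ident absp_deriv assms)
  moreover have "(of_nat 2 * ((0 - 1) * (z - v)^(2 - Suc 0)))/(2*mu) = (v - z)/mu" by (cases "mu = 0") (auto simp: field_simps)
  ultimately show ?thesis unfolding phi_def[abs_def] by simp
qed

lemma prox_stat:
  assumes "mu > 0" "v \<in> prox mu lam q z" "v \<noteq> 0"
  shows "z = v + lam*mu*q * (sgn v) *\<bar>v\<bar> powr (q-1)"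
proof -
  have "(v - z)/mu + lam*(q * (sgn v) *\<bar>v\<bar> powr (q-1)) = 0"
    by (rule DERIV_local_min[OF phi_deriv[OF assms(3)], of 1]) (use assms(2) in \<open>auto simp: prox_iff\<close>)
  hence "(v - z) + mu*(lam*(q * (sgn v) *\<bar>v\<bar> powr (q-1))) = 0" using assms(1)
    by (simp add: field_simps)
  thus ?thesis by (simp add: algebra_simps)
qed

lemma prox_sign:
  assumes "mu > 0" "lam > 0" "v \<in> prox mu lam q z" "v \<noteq> 0"
  shows "v * z > 0"
proof (rule ccontr)
  assume "\<not> v * z > 0"
  hence vz: "v * z \<le> 0" by simp
  show False
  proof (cases "z = 0")
    case True
    have "phi mu lam q z v \<le> phi mu lam q z 0" using assms(3) by (simp add: prox_iff)
    moreover have "phi mu lam q z v > 0" using True assms unfolding phi_def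
      by (intro add_pos_pos) auto
    ultimately show False using True by (simp add: phi_def)
  next
    case False
    hence "v * z < 0" using vz assms(4) False by (metis less_eq_real_def mult_eq_0_iff)
    hence "(z - (-v))^2 < (z - v)^2" by (simp add: power2_eq_square algebra_simps)
    hence "phi mu lam q z (-v) < phi mu lam q z v" using assms(1) unfolding phi_def
      by (simp add: divide_strict_right_mono)
    moreover have "phi mu lam q z v \<le> phi mu lam q z (-v)" using assms(3) by (simp add: prox_iff)
    ultimately show False by simp
  qed
qed

lemma prox_neg:
  assumes "v \<in> prox mu lam q z" shows "-v \<in> prox mu lam q (-z)"
proof -
  have e: "phi mu lam q (-z) (-w) = phi mu lam q z w" for w
    by (simp add: phi_def power2_eq_square algebra_simps)
  show ?thesis unfolding prox_iff
  proof
    fix w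
    show "phi mu lam q (- z) (- v) \<le> phi mu lam q (- z) w"
      using assms e[of v] e[of "-w"] by (simp add: prox_iff)
  qed
qed




lemma prox_pos_unique:
  assumes mu: "mu > 0" and lam: "lam > 0" and q0: "0 < q" and q1: "q < 1" and z: "z > 0"
    and A: "a \<in> prox mu lam q z" and B: "b \<in> prox mu lam q z" and a0: "0 < a" and ab: "a < b"
  shows False
proof -
  define d where "d u = (u - z)/mu + lam*q*u powr (q-1)" for u
  define e where "e u = 1/mu + lam*q*(q-1)*u powr (q-2)" for u
  have dd: "(d has_real_derivative e t) (at t)" if "t > 0" for t
  proof -
    have "((\<lambda>u. (u - z)/mu + lam*q*u powr (q-1)) has_real_derivative (1 - 0)/mu + lam*q*((q-1) * t powr (q - 1 - 1))) (at t)"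
      by (intro DERIV_add DERIV_cmult DERIV_cdivide DERIV_diff DERIV_const DERIV_ident has_real_derivative_powr that)
    thus ?thesis unfolding d_def[abs_def] e_def by (simp add: algebra_simps)
  qed
  have emono: "e s < e t" if "0 < s" "s < t" for s t
  proof -
    have "t powr (q-2) < s powr (q-2)" using that q1 by (intro powr_less_mono2_neg) auto
    moreover have "lam*q*(q-1) < 0" using lam q0 q1 by (simp add: mult_pos_neg)
    ultimately have "lam*q*(q-1) * s powr (q-2) < lam*q*(q-1) * t powr (q-2)"
      by (simp add: mult_less_cancel_left_neg)
    thus ?thesis unfolding e_def by simp
  qed
  have stat: "d v = 0" if "v \<in> prox mu lam q z" "v > 0" for v
  proof -
    have "z = v + lam*mu*q * (sgn v) * \<bar>v\<bar> powr (q-1)" using prox_stat[OF mu that(1)] that(2) by simp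
    hence "z = v + mu*(lam*q* v powr (q-1))" using that(2) by (simp add: algebra_simps)
    thus ?thesis unfolding d_def using mu by (simp add: field_simps)
  qed
  have da: "d a = 0" using stat A a0 by simp
  have db: "d b = 0" using stat B a0 ab by simp
  have dneg: "d t < 0" if at: "a < t" "t < b" for t
  proof (rule ccontr)
    assume "\<not> d t < 0"
    hence dt: "d t \<ge> 0" by simp
    have "\<exists>z>a. z < t \<and> d t - d a = (t - a) * e z"
      by (rule MVT2) (use at dd a0 in auto)
    then obtain x1 where x1: "a < x1" "x1 < t" "d t - d a = (t - a) * e x1" by blast
    have "\<exists>z>t. z < b \<and> d b - d t = (b - t) * e z"
      by (rule MVT2) (use at dd a0 in auto)
    then obtain x2 where x2: "t < x2" "x2 < b" "d b - d t = (b - t) * e x2" by blast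
    have "e x1 \<ge> 0" using x1 da dt at by (simp add: zero_le_mult_iff)
    moreover have "e x2 \<le> 0"
    proof -
      have "(b - t) * e x2 \<le> 0" using x2 dt db by simp
      thus ?thesis using at by (smt (verit) mult_pos_pos)
    qed
    moreover have "e x1 < e x2" using emono x1 x2 a0 by simp
    ultimately show False by simp
  qed
  have pd: "(phi mu lam q z has_real_derivative d t) (at t)" if "t > 0" for t
    using phi_deriv[of t mu lam q z] that unfolding d_def by (simp add: algebra_simps)
  have "\<exists>x>a. x < b \<and> phi mu lam q z b - phi mu lam q z a = (b - a) * d x"
    by (rule MVT2) (use ab pd a0 in auto)
  then obtain x where x: "a < x" "x < b" "phi mu lam q z b - phi mu lam q z a = (b - a) * d x" by blast
  have "(b - a) * d x < 0" using dneg x ab by (simp add: mult_pos_neg)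
  moreover have "phi mu lam q z a \<le> phi mu lam q z b" using A by (simp add: prox_iff)
  ultimately show False using x by simp
qed




lemma prox_zero_tau:
  assumes mu: "mu > 0" and lam: "lam > 0" and q0: "0 < q" and q1: "q < 1"
    and V: "v \<in> prox mu lam q z" and v0: "v \<noteq> 0" and Z: "0 \<in> prox mu lam q z"
  shows "\<bar>z\<bar> = tau mu lam q"
proof -
  define s where "s = \<bar>v\<bar>"
  have s0: "s > 0" using v0 s_def by simp
  define a where "a = lam*mu* s powr (q-1)"
  have a0: "a > 0" using mu lam s0 a_def by simp
  have st: "z = v + q*a* sgn v" using prox_stat[OF mu V v0] unfolding a_def s_def by (simp add: algebra_simps)
  have "phi mu lam q z v \<le> phi mu lam q z 0" "phi mu lam q z 0 \<le> phi mu lam q z v"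
    using V Z by (auto simp: prox_iff)
  hence eq: "(z - v)^2/(2*mu) + lam* s powr q = z^2/(2*mu)" unfolding phi_def s_def by simp
  have sq: "s powr q = s * s powr (q-1)" using s0 powr_add[of s 1 "q-1"] by simp
  have lsq: "lam * s powr q = a* s/mu" unfolding a_def sq using mu by (simp add: field_simps)
  have vs: "v = sgn v * s" unfolding s_def by (simp add: sgn_mult_abs)
  have sg2: "sgn v * sgn v = 1" using v0 by (simp add: sgn_if)
  have zz: "z = sgn v * (s + q*a)" using st vs by (simp add: algebra_simps)
  have z2: "z^2 = (s + q*a)^2" using zz sg2 by (simp add: power2_eq_square algebra_simps)
  have zv2: "(z - v)^2 = (q*a)^2" using st sg2 by (simp add: power2_eq_square algebra_simps)
  have "(q*a)^2 + 2*a* s = (s + q*a)^2"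
  proof -
    have "(q*a)^2/(2*mu) + a* s/mu = (s + q*a)^2/(2*mu)" using eq lsq zv2 z2 by simp
    thus ?thesis using mu by (simp add: field_simps)
  qed
  hence "2*a* s*(1-q) = s* s" by algebra
  hence "s * (2*a*(1-q)) = s * s" by (simp add: algebra_simps)
  hence sa: "s = 2*a*(1-q)" using s0 by (metis mult_cancel_left order_less_irrefl)
  define c where "c = 2*lam*mu*(1-q)"
  have c0: "c > 0" using lam mu q1 c_def by simp
  have "s = c * s powr (q-1)" using sa unfolding a_def c_def by (simp add: algebra_simps)
  hence H: "s * s powr (1-q) = c * (s powr (q-1) * s powr (1-q))" by (metis mult.assoc)
  have "s powr (q-1) * s powr (1-q) = 1" using s0 powr_add[of s "q-1" "1-q"] by simp
  hence "s * s powr (1-q) = c" using H by simp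
  moreover have "s powr (2-q) = s powr 1 * s powr (1-q)" using powr_add[of s 1 "1-q"] by simp
  ultimately have sc: "s powr (2-q) = c" using s0 by simp
  have "c powr (1/(2-q)) = s powr ((2-q) * (1/(2-q)))" by (subst sc[symmetric]) (rule powr_powr)
  also have "(2-q) * (1/(2-q)) = 1" using q1 by simp
  finally have "s = c powr (1/(2-q))" using s0 by simp
  hence seta: "s = eta mu lam q" unfolding eta_def c_def by simp
  have "\<bar>z\<bar> = s + q*a" using zz sg2 a0 s0 q0 v0 by (simp add: abs_mult)
  also have "\<dots> = (2-q)/(2-2*q) * s" using sa q1 by (simp add: field_simps, algebra)
  finally show ?thesis unfolding tau_def using seta unfolding eta_def by simp
qed

lemma prox_exists:
  assumes mu: "mu > 0" and lam: "lam > 0" and q0: "0 < q"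
  shows "\<exists>v. v \<in> prox mu lam q z"
proof -
  have "\<exists>v\<in>{-\<bar>z\<bar>..\<bar>z\<bar>}. \<forall>w\<in>{-\<bar>z\<bar>..\<bar>z\<bar>}. phi mu lam q z v \<le> phi mu lam q z w"
  proof (rule continuous_attains_inf)
    show "continuous_on {-\<bar>z\<bar>..\<bar>z\<bar>} (phi mu lam q z)"
      unfolding phi_def[abs_def]
      by (intro continuous_intros continuous_on_powr') (use q0 mu in auto)
  qed auto
  then obtain v where v: "v \<in> {-\<bar>z\<bar>..\<bar>z\<bar>}" and m: "\<forall>w\<in>{-\<bar>z\<bar>..\<bar>z\<bar>}. phi mu lam q z v \<le> phi mu lam q z w" by blast
  have "phi mu lam q z v \<le> phi mu lam q z w" for w
  proof (cases "\<bar>w\<bar> \<le> \<bar>z\<bar>")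
    case True thus ?thesis using m by (auto simp: abs_le_iff)
  next
    case False
    have "z \<in> {-\<bar>z\<bar>..\<bar>z\<bar>}" by (auto simp: abs_if)
    hence "phi mu lam q z v \<le> phi mu lam q z z" using m by blast
    also have "\<dots> = lam * \<bar>z\<bar> powr q" by (simp add: phi_def)
    also have "\<dots> \<le> lam * \<bar>w\<bar> powr q" using False lam q0 by (intro mult_left_mono powr_mono2) auto
    also have "\<dots> \<le> phi mu lam q z w" using mu by (simp add: phi_def)
    finally show ?thesis .
  qed
  thus ?thesis by (auto simp: prox_iff)
qed

lemma prox_unique:
  assumes mu: "mu > 0" and lam: "lam > 0" and q0: "0 < q" and q1: "q < 1"
    and zt: "\<bar>z\<bar> \<noteq> tau mu lam q"
    and A: "a \<in> prox mu lam q z" and B: "b \<in> prox mu lam q z"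
  shows "a = b"
proof (rule ccontr)
  assume ne: "a \<noteq> b"
  show False
  proof (cases "a = 0 \<or> b = 0")
    case True
    then show False using prox_zero_tau[OF mu lam q0 q1 A _ ] prox_zero_tau[OF mu lam q0 q1 B]
      A B ne zt by auto
  next
    case False
    hence az: "a * z > 0" "b * z > 0" using prox_sign[OF mu lam] A B by auto
    show False
    proof (cases "z > 0")
      case True
      hence "a > 0" "b > 0" using az by (auto simp: zero_less_mult_iff)
      thus False using ne prox_pos_unique[OF mu lam q0 q1 True A B] prox_pos_unique[OF mu lam q0 q1 True B A]
        by (metis linorder_neq_iff)
    next
      case False
      hence zn: "-z > 0" using az by (cases "z = 0") auto
      have "a < 0" "b < 0" using az False zn by (auto simp: zero_less_mult_iff)
      moreover have "-a \<in> prox mu lam q (-z)" "-b \<in> prox mu lam q (-z)" using A B prox_neg by auto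
      ultimately show False using ne prox_pos_unique[OF mu lam q0 q1 zn, of "-a" "-b"] prox_pos_unique[OF mu lam q0 q1 zn, of "-b" "-a"]
        by (metis linorder_neq_iff neg_0_less_iff_less neg_less_iff_less)
    qed
  qed
qed

lemma Top_in_prox:
  assumes mu: "mu > 0" and lam: "lam > 0" and q0: "0 < q" and q1: "q < 1"
    and zt: "\<bar>z\<bar> \<noteq> tau mu lam q"
  shows "Top mu lam q z w \<in> prox mu lam q z"
proof -
  obtain v where v: "v \<in> prox mu lam q z" using prox_exists[OF mu lam q0] by blast
  have "\<exists>!v. v \<in> prox mu lam q z" using v prox_unique[OF mu lam q0 q1 zt] by blast
  hence "(THE v. v \<in> prox mu lam q z) \<in> prox mu lam q z" by (rule theI')
  thus ?thesis using zt by (simp add: Top_def)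
qed

lemma Top_stat:
  assumes mu: "mu > 0" and lam: "lam > 0" and q0: "0 < q" and q1: "q < 1"
    and w0: "w \<noteq> 0" and v0: "Top mu lam q z w \<noteq> 0"
  shows "z = Top mu lam q z w + lam*mu*q * sgn (Top mu lam q z w) * \<bar>Top mu lam q z w\<bar> powr (q-1)"
proof (cases "\<bar>z\<bar> = tau mu lam q")
  case False
  thus ?thesis using prox_stat[OF mu Top_in_prox[OF mu lam q0 q1 False] v0] by simp
next
  case True
  define c where "c = 2*lam*mu*(1-q)"
  have c0: "c > 0" using lam mu q1 c_def by simp
  define e where "e = eta mu lam q"
  have e_def': "e = c powr (1/(2-q))" unfolding e_def eta_def c_def by simp
  have e0: "e > 0" using c0 e_def' by simp
  have T: "Top mu lam q z w = sgn z * e" using True w0 by (simp add: Top_def e_def)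
  hence z0: "z \<noteq> 0" using v0 by auto
  have "e powr (q-2) = c powr (1/(2-q) * (q-2))" unfolding e_def' by (simp add: powr_powr)
  also have "1/(2-q) * (q-2) = -1" using q1 by (simp add: field_simps)
  finally have "e powr (q-2) = 1/c" using c0 by (simp add: powr_minus divide_inverse)
  moreover have "e powr (q-1) = e powr (q-2) * e powr 1"
    using powr_add[of e "q-2" 1] by simp
  ultimately have eq1: "e powr (q-1) = e / c" using e0 by simp
  have tt: "tau mu lam q = (2-q)/(2-2*q) * e" unfolding tau_def e_def eta_def by simp
  have "e + lam*mu*q*(e/c) = (2-q)/(2-2*q) * e" unfolding c_def using lam mu q1 by (simp add: field_simps)
  hence "\<bar>z\<bar> = e + lam*mu*q*e powr (q-1)" using True tt eq1 by simp
  hence "z = sgn z * (e + lam*mu*q*e powr (q-1))" by (metis sgn_mult_abs)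
  moreover have "sgn (sgn z * e) = sgn z" "\<bar>sgn z * e\<bar> = e" using z0 e0 by (auto simp: sgn_mult abs_mult)
  ultimately show ?thesis unfolding T by (simp add: algebra_simps)
qed




lemma taylor_pos:
  fixes x q eps :: real
  assumes x0: "x > 0" and q0: "0 < q" and q1: "q < 1" and e0: "eps > 0"
  shows "\<exists>d>0. \<forall>t. \<bar>t\<bar> < d \<longrightarrow>
     q*(q-1)/2 * x powr (q-2) * t^2 - eps * t^2 \<le> \<bar>x+t\<bar> powr q - x powr q - q * x powr (q-1) * t"
proof -
  define f2 where "f2 u = q*(q-1)*u powr (q-2)" for u
  have "(f2 \<longlongrightarrow> f2 x) (at x)" unfolding f2_def using x0 by (intro tendsto_intros) auto
  from LIM_D[OF this, of "2*eps"] e0 obtain d1 where d1: "d1 > 0"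
    "\<And>u. u \<noteq> x \<and> norm (u - x) < d1 \<Longrightarrow> norm (f2 u - f2 x) < 2*eps" by auto
  define d where "d = min d1 (x/2)"
  have d0: "d > 0" using d1 x0 d_def by simp
  define diff where "diff (m::nat) u = (if m = 0 then u powr q else if m = 1 then q * u powr (q-1) else f2 u)" for m u
  have DER: "\<forall>(m::nat) t. m < 2 \<and> x/2 \<le> t \<and> t \<le> 3*x/2 \<longrightarrow> DERIV (diff m) t :> diff (Suc m) t"
  proof (intro allI impI)
    fix m :: nat and t :: real assume a: "m < 2 \<and> x/2 \<le> t \<and> t \<le> 3*x/2"
    hence tp: "t > 0" using x0 by simp
    show "DERIV (diff m) t :> diff (Suc m) t"
    proof (cases "m = 0")
      case True
      thus ?thesis using has_real_derivative_powr[OF tp, of q] by (simp add: diff_def[abs_def])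
    next
      case False
      hence m1: "m = 1" using a by simp
      have "((\<lambda>u. q * u powr (q-1)) has_real_derivative q * ((q-1) * t powr (q-1-1))) (at t)"
        by (intro DERIV_cmult has_real_derivative_powr tp)
      thus ?thesis using m1 by (simp add: diff_def[abs_def] f2_def algebra_simps)
    qed
  qed
  show ?thesis
  proof (intro exI[of _ d] conjI allI impI d0)
    fix t assume t: "\<bar>t\<bar> < d"
    show "q*(q-1)/2 * x powr (q-2) * t^2 - eps * t^2 \<le> \<bar>x+t\<bar> powr q - x powr q - q * x powr (q-1) * t"
    proof (cases "t = 0")
      case True thus ?thesis using x0 by simp
    next
      case False
      have xt: "x + t > 0" using t d_def x0 by auto
      have tb: "x/2 \<le> x + t" "x + t \<le> 3*x/2" using t d_def by (auto simp: abs_less_iff)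
      obtain s where s: "(if x + t < x then x + t < s \<and> s < x else x < s \<and> s < x + t)"
        "(x+t) powr q = (\<Sum>m<2. (diff m x / fact m) * (x + t - x)^m) + (diff 2 s / fact 2) * (x + t - x)^2"
        using Taylor[of 2 diff "\<lambda>u. u powr q" "x/2" "3*x/2" x "x+t", OF _ _ DER] tb x0 False
        by (auto simp: diff_def[abs_def])
      have sx: "s \<noteq> x \<and> norm (s - x) < d1" using s(1) t d_def by (auto split: if_splits)
      have "f2 x - 2*eps \<le> f2 s" using d1(2)[OF sx] by auto
      hence rem: "(f2 x - 2*eps)/2 * t^2 \<le> f2 s / 2 * t^2"
        by (intro mult_right_mono divide_right_mono) auto
      have eq: "(x+t) powr q = x powr q + q * x powr (q-1) * t + f2 s / 2 * t^2"
        using s(2) by (simp add: diff_def numeral_2_eq_2)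
      have "\<bar>x+t\<bar> powr q - x powr q - q * x powr (q-1) * t = f2 s / 2 * t^2" using eq xt by simp
      moreover have "q*(q-1)/2 * x powr (q-2) * t^2 - eps * t^2 = (f2 x - 2*eps)/2 * t^2"
        by (simp add: f2_def field_simps)
      ultimately show ?thesis using rem by linarith
    qed
  qed
qed

lemma taylor_abs:
  fixes x q eps :: real
  assumes x0: "x \<noteq> 0" and q0: "0 < q" and q1: "q < 1" and e0: "eps > 0"
  shows "\<exists>d>0. \<forall>t. \<bar>t\<bar> < d \<longrightarrow>
     q*(q-1)/2 * \<bar>x\<bar> powr (q-2) * t^2 - eps * t^2 \<le> \<bar>x+t\<bar> powr q - \<bar>x\<bar> powr q - q * sgn x * \<bar>x\<bar> powr (q-1) * t"
proof (cases "x > 0")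
  case True
  then show ?thesis using taylor_pos[OF True q0 q1 e0] by simp
next
  case False
  hence xn: "-x > 0" using x0 by simp
  obtain d where d: "d > 0" "\<forall>t. \<bar>t\<bar> < d \<longrightarrow>
     q*(q-1)/2 * (-x) powr (q-2) * t^2 - eps * t^2 \<le> \<bar>-x+t\<bar> powr q - (-x) powr q - q * (-x) powr (q-1) * t"
    using taylor_pos[OF xn q0 q1 e0] by blast
  show ?thesis
  proof (intro exI[of _ d] conjI allI impI d(1))
    fix t assume t: "\<bar>t\<bar> < d"
    have "\<bar>-t\<bar> < d" using t by simp
    from d(2)[rule_format, OF this] show "q*(q-1)/2 * \<bar>x\<bar> powr (q-2) * t^2 - eps * t^2 \<le> \<bar>x+t\<bar> powr q - \<bar>x\<bar> powr q - q * sgn x * \<bar>x\<bar> powr (q-1) * t"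
      using xn by (simp add: abs_minus_commute add.commute)
  qed
qed




lemma pd_uniform:
  fixes I :: "nat set" and H :: "nat \<Rightarrow> nat \<Rightarrow> real"
  assumes fin: "finite I" and pd: "pos_def_on I H"
  shows "\<exists>c>0. \<forall>v. c * (\<Sum>i\<in>I. (v i)^2) \<le> (\<Sum>i\<in>I. \<Sum>j\<in>I. v i * H i j * v j)"
proof (cases "I = {}")
  case True thus ?thesis by (intro exI[of _ 1]) auto
next
  case False
  then obtain i0 where i0: "i0 \<in> I" by blast
  define S where "S = {v::nat\<Rightarrow>real. (\<forall>i. i \<notin> I \<longrightarrow> v i = 0) \<and> (\<Sum>i\<in>I. (v i)^2) = 1}"
  define Q where "Q v = (\<Sum>i\<in>I. \<Sum>j\<in>I. v i * H i j * v j)" for v :: "nat \<Rightarrow> real"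
  have cS: "compact S" unfolding S_def by (rule compact_sphere_fun[OF fin])
  define u0 where "u0 i = (if i = i0 then 1 else 0::real)" for i
  have "(\<Sum>i\<in>I. (u0 i)^2) = (\<Sum>i\<in>I. if i = i0 then 1 else 0)"
    by (intro sum.cong) (auto simp: u0_def)
  also have "\<dots> = 1" using fin i0 by simp
  finally have "u0 \<in> S" unfolding S_def using i0 by (auto simp: u0_def)
  hence ne: "S \<noteq> {}" by blast
  have cc: "\<And>i. continuous_on S (\<lambda>v::nat\<Rightarrow>real. v i)"
    by (rule continuous_on_subset[OF continuous_on_product_coordinates]) simp
  have cQ: "continuous_on S Q" unfolding Q_def
    by (intro continuous_on_sum continuous_on_mult continuous_on_const cc)
  obtain v0 where v0: "v0 \<in> S" "\<And>v. v \<in> S \<Longrightarrow> Q v0 \<le> Q v"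
    using continuous_attains_inf[OF cS ne cQ] by blast
  have "\<exists>i\<in>I. v0 i \<noteq> 0"
  proof (rule ccontr)
    assume "\<not> (\<exists>i\<in>I. v0 i \<noteq> 0)"
    hence "(\<Sum>i\<in>I. (v0 i)^2) = 0" by simp
    thus False using v0(1) unfolding S_def by simp
  qed
  hence c0: "Q v0 > 0" using pd unfolding pos_def_on_def Q_def by blast
  show ?thesis
  proof (intro exI[of _ "Q v0"] conjI allI c0)
    fix v :: "nat \<Rightarrow> real"
    define r2 where "r2 = (\<Sum>i\<in>I. (v i)^2)"
    have r20: "r2 \<ge> 0" unfolding r2_def by (intro sum_nonneg) auto
    show "Q v0 * (\<Sum>i\<in>I. (v i)^2) \<le> (\<Sum>i\<in>I. \<Sum>j\<in>I. v i * H i j * v j)"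
    proof (cases "r2 = 0")
      case True
      hence "\<forall>i\<in>I. (v i)^2 = 0" unfolding r2_def using fin by (subst (asm) sum_nonneg_eq_0_iff) auto
      hence "\<forall>i\<in>I. v i = 0" by simp
      thus ?thesis using True r2_def by simp
    next
      case False
      hence rp: "r2 > 0" using r20 by simp
      define r where "r = sqrt r2"
      have r0: "r > 0" using rp r_def by simp
      have rr: "r * r = r2" using r20 r_def by simp
      define u where "u i = (if i \<in> I then v i / r else 0)" for i
      have "(\<Sum>i\<in>I. (u i)^2) = (\<Sum>i\<in>I. (v i)^2 / r2)"
        unfolding u_def using rr by (intro sum.cong) (auto simp: power_divide power2_eq_square)
      also have "\<dots> = 1" using rp unfolding r2_def by (simp add: sum_divide_distrib[symmetric])
      finally have "u \<in> S" unfolding S_def u_def by auto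
      hence "Q v0 \<le> Q u" by (rule v0(2))
      also have "Q u = Q v / r2"
        unfolding Q_def u_def sum_divide_distrib rr[symmetric]
        by (intro sum.cong refl) (auto simp: field_simps)
      finally have "Q v0 * r2 \<le> Q v" using rp by (simp add: field_simps)
      thus ?thesis unfolding r2_def Q_def .
    qed
  qed
qed




lemma stationarity:
  fixes m N :: nat and A :: "nat \<Rightarrow> nat \<Rightarrow> real" and y x0 xs :: "nat \<Rightarrow> real"
    and lam q mu :: real
  assumes N0: "N > 0" and lam: "lam > 0" and q0: "0 < q" and q1: "q < 1" and mu: "0 < mu"
    and conv: "\<forall>i<N. (\<lambda>n. gaita m N A y mu lam q x0 n i) \<longlonglongrightarrow> xs i"
    and iN: "i < N" and xi: "xs i \<noteq> 0"
  shows "(\<Sum>k<m. A k i * ((\<Sum>j<N. A k j * xs j) - y k)) + lam * q * sgn (xs i) * \<bar>xs i\<bar> powr (q-1) = 0"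
proof -
  define X where "X n = gaita m N A y mu lam q x0 n" for n
  define zf where "zf x = x i - mu * (\<Sum>k<m. A k i * ((\<Sum>j<N. A k j * x j) - y k))" for x :: "nat \<Rightarrow> real"
  define sub where "sub n = n * N + i" for n
  have smono: "strict_mono sub" unfolding sub_def strict_mono_def using N0 by simp
  have smod: "sub n mod N = i" for n unfolding sub_def using iN by simp
  have step: "X (Suc (sub n)) i = Top mu lam q (zf (X (sub n))) (X (sub n) i)" for n
    unfolding X_def zf_def using smod[of n] by (simp add: Let_def)
  have L1: "(\<lambda>n. X (sub n) j) \<longlonglongrightarrow> xs j" if "j < N" for j
    using LIMSEQ_subseq_LIMSEQ[OF conv[rule_format, OF that] smono] unfolding X_def comp_def .
  have smono2: "strict_mono (\<lambda>n. Suc (sub n))" using smono unfolding strict_mono_def by simp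
  have L2: "(\<lambda>n. X (Suc (sub n)) i) \<longlonglongrightarrow> xs i"
    using LIMSEQ_subseq_LIMSEQ[OF conv[rule_format, OF iN] smono2] unfolding X_def comp_def .
  have Lz: "(\<lambda>n. zf (X (sub n))) \<longlonglongrightarrow> zf xs"
    unfolding zf_def
    by (intro tendsto_diff tendsto_mult tendsto_const tendsto_sum L1 iN) auto
  define V where "V n = X (Suc (sub n)) i" for n
  have ev1: "eventually (\<lambda>n. V n \<noteq> 0) sequentially"
    using tendsto_imp_eventually_ne[OF L2 xi] unfolding V_def .
  have ev2: "eventually (\<lambda>n. X (sub n) i \<noteq> 0) sequentially"
    using tendsto_imp_eventually_ne[OF L1[OF iN] xi] .
  have ev: "eventually (\<lambda>n. V n + lam*mu*q * sgn (V n) * \<bar>V n\<bar> powr (q-1) = zf (X (sub n))) sequentially"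
    using ev1 ev2
  proof eventually_elim
    case (elim n)
    show ?case using Top_stat[OF mu lam q0 q1 elim(2), of "zf (X (sub n))"] elim(1)
      unfolding V_def step by simp
  qed
  have LV: "(\<lambda>n. V n + lam*mu*q * sgn (V n) * \<bar>V n\<bar> powr (q-1)) \<longlonglongrightarrow>
      xs i + lam*mu*q * sgn (xs i) * \<bar>xs i\<bar> powr (q-1)"
    unfolding V_def using xi by (intro tendsto_intros L2) auto
  have "(\<lambda>n. zf (X (sub n))) \<longlonglongrightarrow> xs i + lam*mu*q * sgn (xs i) * \<bar>xs i\<bar> powr (q-1)"
    by (rule Lim_transform_eventually[OF LV ev])
  hence "zf xs = xs i + lam*mu*q * sgn (xs i) * \<bar>xs i\<bar> powr (q-1)"
    using Lz LIMSEQ_unique by blast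
  hence "mu * ((\<Sum>k<m. A k i * ((\<Sum>j<N. A k j * xs j) - y k)) + lam * q * sgn (xs i) * \<bar>xs i\<bar> powr (q-1)) = 0"
    unfolding zf_def by (simp add: algebra_simps)
  thus ?thesis using mu by simp
qed




lemma cross_ineq:
  fixes a b th :: real assumes th: "th > 0"
  shows "a^2 - th*a^2 - b^2/th \<le> (a+b)^2"
proof -
  have "(a+b)^2 - (a^2 - th*a^2 - b^2/th) = (th*a+b)^2/th + b^2"
    using th by (simp add: field_simps power2_eq_square)
  moreover have "(th*a+b)^2/th + b^2 \<ge> 0" using th by simp
  ultimately show ?thesis by linarith
qed

lemma Jterm:
  fixes g t lam q G C :: real
  assumes lam: "lam > 0" and q0: "0 < q" and q1: "q < 1" and gG: "\<bar>g\<bar> \<le> G"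
    and GC: "G + C > 0" and C0: "C \<ge> 0"
    and t: "\<bar>t\<bar> < min 1 ((lam/(G+C)) powr (1/(1-q)))" and t0: "t \<noteq> 0"
  shows "0 < g*t + lam*\<bar>t\<bar> powr q - C*t^2"
proof -
  let ?d = "min 1 ((lam/(G+C)) powr (1/(1-q)))"
  have at: "\<bar>t\<bar> > 0" using t0 by simp
  have t1: "\<bar>t\<bar> \<le> 1" using t by simp
  have "\<bar>t\<bar> powr (1-q) < ((lam/(G+C)) powr (1/(1-q))) powr (1-q)"
    using t at q1 by (intro powr_less_mono2) auto
  also have "\<dots> = lam/(G+C)" using lam GC q1 by (simp add: powr_powr)
  finally have p1: "\<bar>t\<bar> powr (1-q) < lam/(G+C)" .
  have tsq: "t^2 \<le> \<bar>t\<bar>"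
  proof -
    have "\<bar>t\<bar> * \<bar>t\<bar> \<le> \<bar>t\<bar> * 1" using t1 by (intro mult_left_mono) auto
    thus ?thesis by (simp add: power2_eq_square)
  qed
  have split: "\<bar>t\<bar> = \<bar>t\<bar> powr (1-q) * \<bar>t\<bar> powr q"
    using at powr_add[of "\<bar>t\<bar>" "1-q" q] by simp
  have "(G+C) * \<bar>t\<bar> powr (1-q) < lam" using p1 GC by (simp add: field_simps)
  hence "(G+C) * \<bar>t\<bar> powr (1-q) * \<bar>t\<bar> powr q < lam * \<bar>t\<bar> powr q"
    using at by (intro mult_strict_right_mono) auto
  hence "(G+C) * \<bar>t\<bar> < lam * \<bar>t\<bar> powr q" using split by (simp add: mult.assoc)
  moreover have "-(g*t) \<le> G*\<bar>t\<bar>"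
  proof -
    have "\<bar>g*t\<bar> \<le> G*\<bar>t\<bar>" unfolding abs_mult using gG by (intro mult_right_mono) auto
    thus ?thesis by linarith
  qed
  moreover have "C*t^2 \<le> C*\<bar>t\<bar>" using tsq C0 by (simp add: mult_left_mono)
  ultimately show ?thesis by (simp add: algebra_simps)
qed




lemma core:
  fixes m N :: nat and A :: "nat \<Rightarrow> nat \<Rightarrow> real" and y xs :: "nat \<Rightarrow> real"
    and lam q :: real
  assumes lam: "lam > 0" and q0: "0 < q" and q1: "q < 1"
    and stat: "\<forall>i\<in>supp N xs. (\<Sum>k<m. A k i * ((\<Sum>j<N. A k j * xs j) - y k)) + lam * q * sgn (xs i) * \<bar>xs i\<bar> powr (q-1) = 0"
    and pd: "pos_def_on (supp N xs) (hessI m A lam q xs)"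
  shows "strict_local_min N (Tlam m N A y lam q) xs"
proof -
  define I where "I = supp N xs"
  define J where "J = {i. i < N \<and> xs i = 0}"
  have finI: "finite I" unfolding I_def supp_def by simp
  have finJ: "finite J" unfolding J_def by simp
  have IJ: "{..<N} = I \<union> J" "I \<inter> J = {}" unfolding I_def J_def supp_def by auto
  define r where "r k = (\<Sum>j<N. A k j * xs j) - y k" for k
  define g where "g i = (\<Sum>k<m. A k i * r k)" for i
  define D where "D i = lam*q*(q-1)*\<bar>xs i\<bar> powr (q-2)" for i
  have gI: "g i = - (lam * q * sgn (xs i) * \<bar>xs i\<bar> powr (q-1))" if "i \<in> I" for i
    using stat that unfolding I_def g_def r_def by (simp add: eq_neg_iff_add_eq_0)
  obtain c where c0: "c > 0" and cQ: "\<And>v. c * (\<Sum>i\<in>I. (v i)^2) \<le> (\<Sum>i\<in>I. \<Sum>j\<in>I. v i * hessI m A lam q xs i j * v j)"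
    using pd_uniform[OF finI pd[folded I_def]] by blast
  define M where "M = 1 + (\<Sum>k<m. \<Sum>j<N. (A k j)^2)"
  have M0: "M > 0" unfolding M_def by (simp add: add_pos_nonneg sum_nonneg)
  define th where "th = c/(2*M)"
  have th0: "th > 0" unfolding th_def using c0 M0 by simp
  define C where "C = M^2/c"
  have C0: "C > 0" unfolding C_def using c0 M0 by simp
  define G where "G = 1 + (\<Sum>j<N. \<bar>g j\<bar>)"
  have gG: "\<bar>g j\<bar> \<le> G" if "j < N" for j
  proof -
    have "\<bar>g j\<bar> \<le> (\<Sum>j<N. \<bar>g j\<bar>)" using that by (intro member_le_sum) auto
    thus ?thesis unfolding G_def by simp
  qed
  have G0: "G \<ge> 0" unfolding G_def by (simp add: add_nonneg_nonneg sum_nonneg)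
  define eps where "eps = c/(8*lam)"
  have eps0: "eps > 0" unfolding eps_def using c0 lam by simp
  have "\<forall>i\<in>I. \<exists>d>0. \<forall>t. \<bar>t\<bar> < d \<longrightarrow>
     q*(q-1)/2 * \<bar>xs i\<bar> powr (q-2) * t^2 - eps * t^2 \<le> \<bar>xs i+t\<bar> powr q - \<bar>xs i\<bar> powr q - q * sgn (xs i) * \<bar>xs i\<bar> powr (q-1) * t"
    using taylor_abs[OF _ q0 q1 eps0] unfolding I_def supp_def by auto
  then obtain dI where dI: "\<And>i. i \<in> I \<Longrightarrow> dI i > 0"
    "\<And>i t. i \<in> I \<Longrightarrow> \<bar>t\<bar> < dI i \<Longrightarrow>
     q*(q-1)/2 * \<bar>xs i\<bar> powr (q-2) * t^2 - eps * t^2 \<le> \<bar>xs i+t\<bar> powr q - \<bar>xs i\<bar> powr q - q * sgn (xs i) * \<bar>xs i\<bar> powr (q-1) * t"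
    by metis
  define dJ where "dJ = min 1 ((lam/(G+C)) powr (1/(1-q)))"
  have dJ0: "dJ > 0" unfolding dJ_def using lam G0 C0 by simp
  define d where "d = Min (insert dJ (dI ` I))"
  have d0: "d > 0" unfolding d_def using finI dJ0 dI(1) by auto
  have ddJ: "d \<le> dJ" unfolding d_def using finI by simp
  have ddI: "d \<le> dI i" if "i \<in> I" for i unfolding d_def using finI that by simp
  show ?thesis unfolding strict_local_min_def
  proof (intro exI[of _ d] conjI allI impI d0)
    fix x :: "nat \<Rightarrow> real"
    assume xa: "sqrt (\<Sum>i<N. (x i - xs i)^2) < d \<and> (\<exists>i<N. x i \<noteq> xs i)"
    define h where "h i = x i - xs i" for i
    have hsmall: "\<bar>h i\<bar> < d" if "i < N" for i
    proof -
      have "(h i)^2 \<le> (\<Sum>i<N. (h i)^2)" using that by (intro member_le_sum) auto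
      hence "sqrt ((h i)^2) \<le> sqrt (\<Sum>i<N. (x i - xs i)^2)" unfolding h_def by (intro real_sqrt_le_mono)
      thus ?thesis using xa by simp
    qed
    define Ah where "Ah k = (\<Sum>j<N. A k j * h j)" for k
    define AI where "AI k = (\<Sum>j\<in>I. A k j * h j)" for k
    define AJ where "AJ k = (\<Sum>j\<in>J. A k j * h j)" for k
    define hI2 where "hI2 = (\<Sum>i\<in>I. (h i)^2)"
    define hJ2 where "hJ2 = (\<Sum>i\<in>J. (h i)^2)"
    define SA where "SA = (\<Sum>k<m. (Ah k)^2)"
    define SAI where "SAI = (\<Sum>k<m. (AI k)^2)"
    define SAJ where "SAJ = (\<Sum>k<m. (AJ k)^2)"
    define SD where "SD = (\<Sum>i\<in>I. D i * (h i)^2)"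
    define SI where "SI = (\<Sum>i\<in>I. g i * h i + lam * (\<bar>x i\<bar> powr q - \<bar>xs i\<bar> powr q))"
    define SJ where "SJ = (\<Sum>j\<in>J. g j * h j + lam * \<bar>h j\<bar> powr q)"
    define Qh where "Qh = (\<Sum>i\<in>I. \<Sum>j\<in>I. h i * hessI m A lam q xs i j * h j)"
    have F1: "Tlam m N A y lam q x - Tlam m N A y lam q xs =
        (\<Sum>i<N. g i * h i) + SA/2 + lam * (\<Sum>i<N. \<bar>x i\<bar> powr q - \<bar>xs i\<bar> powr q)"
    proof -
      have R: "(\<Sum>j<N. A k j * x j) - y k = r k + Ah k" for k
        unfolding r_def Ah_def h_def by (simp add: right_diff_distrib sum_subtractf)
      have rAh: "(\<Sum>k<m. r k * Ah k) = (\<Sum>j<N. g j * h j)"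
      proof -
        have "(\<Sum>k<m. r k * Ah k) = (\<Sum>k<m. \<Sum>j<N. A k j * r k * h j)" unfolding Ah_def by (simp add: sum_distrib_left mult_ac)
        also have "\<dots> = (\<Sum>j<N. \<Sum>k<m. A k j * r k * h j)" by (rule sum.swap)
        also have "\<dots> = (\<Sum>j<N. g j * h j)" unfolding g_def by (simp add: sum_distrib_right)
        finally show ?thesis .
      qed
      have sq: "(\<Sum>k<m. ((\<Sum>j<N. A k j * x j) - y k)^2) = (\<Sum>k<m. (r k)^2) + 2 * (\<Sum>j<N. g j * h j) + SA"
        unfolding R SA_def rAh[symmetric] by (simp add: power2_sum sum.distrib sum_distrib_left mult.assoc)
      have Txs: "Tlam m N A y lam q xs = (1/2) * (\<Sum>k<m. (r k)^2) + lam * (\<Sum>i<N. \<bar>xs i\<bar> powr q)"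
        unfolding Tlam_def r_def ..
      have Tx: "Tlam m N A y lam q x = (1/2) * ((\<Sum>k<m. (r k)^2) + 2 * (\<Sum>j<N. g j * h j) + SA) + lam * (\<Sum>i<N. \<bar>x i\<bar> powr q)"
        unfolding Tlam_def sq ..
      show ?thesis unfolding Tx Txs by (simp add: sum_subtractf algebra_simps)
    qed
    have F2: "(\<Sum>i<N. g i * h i) + lam * (\<Sum>i<N. \<bar>x i\<bar> powr q - \<bar>xs i\<bar> powr q) = SI + SJ"
    proof -
      define f where "f i = g i * h i + lam * (\<bar>x i\<bar> powr q - \<bar>xs i\<bar> powr q)" for i
      have "(\<Sum>i<N. g i * h i) + lam * (\<Sum>i<N. \<bar>x i\<bar> powr q - \<bar>xs i\<bar> powr q) = (\<Sum>i<N. f i)"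
        unfolding f_def by (simp add: sum.distrib sum_distrib_left)
      also have "\<dots> = (\<Sum>i\<in>I. f i) + (\<Sum>i\<in>J. f i)" unfolding IJ(1) by (rule sum.union_disjoint[OF finI finJ IJ(2)])
      also have "(\<Sum>i\<in>I. f i) = SI" unfolding SI_def f_def ..
      also have "(\<Sum>i\<in>J. f i) = SJ" unfolding SJ_def f_def
        by (intro sum.cong refl) (auto simp: J_def h_def)
      finally show ?thesis .
    qed
    have F3: "SD/2 - c/8 * hI2 \<le> SI"
    proof -
      have tm: "D i * (h i)^2/2 - c/8 * (h i)^2 \<le> g i * h i + lam * (\<bar>x i\<bar> powr q - \<bar>xs i\<bar> powr q)"
        if iI: "i \<in> I" for i
      proof -
        have iN: "i < N" using iI IJ(1) by auto
        have "\<bar>h i\<bar> < dI i" using hsmall[OF iN] ddI[OF iI] by linarith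
        from dI(2)[OF iI this]
        have T: "q*(q-1)/2 * \<bar>xs i\<bar> powr (q-2) * (h i)^2 - eps * (h i)^2 \<le> \<bar>x i\<bar> powr q - \<bar>xs i\<bar> powr q - q * sgn (xs i) * \<bar>xs i\<bar> powr (q-1) * h i"
          unfolding h_def by simp
        have "lam * (q*(q-1)/2 * \<bar>xs i\<bar> powr (q-2) * (h i)^2 - eps * (h i)^2) \<le> lam * (\<bar>x i\<bar> powr q - \<bar>xs i\<bar> powr q - q * sgn (xs i) * \<bar>xs i\<bar> powr (q-1) * h i)"
          using T lam by (intro mult_left_mono) auto
        moreover have "lam * (q*(q-1)/2 * \<bar>xs i\<bar> powr (q-2) * (h i)^2 - eps * (h i)^2) = D i * (h i)^2/2 - c/8 * (h i)^2"
          unfolding D_def eps_def using lam by (simp add: field_simps)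
        moreover have "lam * (\<bar>x i\<bar> powr q - \<bar>xs i\<bar> powr q - q * sgn (xs i) * \<bar>xs i\<bar> powr (q-1) * h i) = g i * h i + lam * (\<bar>x i\<bar> powr q - \<bar>xs i\<bar> powr q)"
          using gI[OF iI] by (simp add: algebra_simps)
        ultimately show ?thesis by simp
      qed
      have "(\<Sum>i\<in>I. D i * (h i)^2/2 - c/8 * (h i)^2) \<le> SI" unfolding SI_def by (intro sum_mono tm)
      moreover have "(\<Sum>i\<in>I. D i * (h i)^2/2 - c/8 * (h i)^2) = SD/2 - c/8 * hI2"
        unfolding SD_def hI2_def by (simp add: sum_subtractf sum_divide_distrib sum_distrib_left)
      ultimately show ?thesis by simp
    qed
    have F4: "SAI - th * SAI - SAJ/th \<le> SA"
    proof -
      have AhS: "Ah k = AI k + AJ k" for k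
        unfolding Ah_def AI_def AJ_def IJ(1) by (rule sum.union_disjoint[OF finI finJ IJ(2)])
      have "(\<Sum>k<m. (AI k)^2 - th*(AI k)^2 - (AJ k)^2/th) \<le> SA"
        unfolding SA_def AhS by (intro sum_mono cross_ineq th0)
      moreover have "(\<Sum>k<m. (AI k)^2 - th*(AI k)^2 - (AJ k)^2/th) = SAI - th * SAI - SAJ/th"
        unfolding SAI_def SAJ_def by (simp add: sum_subtractf sum_distrib_left sum_divide_distrib)
      ultimately show ?thesis by simp
    qed
    have F5: "SAI \<le> M * hI2" "SAJ \<le> M * hJ2"
    proof -
      have sub: "I \<subseteq> {..<N}" "J \<subseteq> {..<N}" using IJ(1) by auto
      have cs: "(\<Sum>j\<in>K. A k j * h j)^2 \<le> (\<Sum>j<N. (A k j)^2) * (\<Sum>j\<in>K. (h j)^2)"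
        if "K \<subseteq> {..<N}" for K k
      proof -
        have "(\<Sum>j\<in>K. A k j * h j)^2 \<le> (\<Sum>j\<in>K. (A k j)^2) * (\<Sum>j\<in>K. (h j)^2)"
          by (rule Cauchy_Schwarz_ineq_sum)
        also have "\<dots> \<le> (\<Sum>j<N. (A k j)^2) * (\<Sum>j\<in>K. (h j)^2)"
          using that by (intro mult_right_mono sum_mono2 sum_nonneg) auto
        finally show ?thesis .
      qed
      have tot: "(\<Sum>k<m. (\<Sum>j\<in>K. A k j * h j)^2) \<le> M * (\<Sum>j\<in>K. (h j)^2)"
        if "K \<subseteq> {..<N}" for K
      proof -
        have "(\<Sum>k<m. (\<Sum>j\<in>K. A k j * h j)^2) \<le> (\<Sum>k<m. (\<Sum>j<N. (A k j)^2) * (\<Sum>j\<in>K. (h j)^2))"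
          using cs[OF that] by (intro sum_mono) auto
        also have "\<dots> = (\<Sum>k<m. \<Sum>j<N. (A k j)^2) * (\<Sum>j\<in>K. (h j)^2)" by (simp add: sum_distrib_right)
        also have "\<dots> \<le> M * (\<Sum>j\<in>K. (h j)^2)" unfolding M_def by (intro mult_right_mono sum_nonneg) auto
        finally show ?thesis .
      qed
      show "SAI \<le> M * hI2" using tot[OF sub(1)] unfolding SAI_def AI_def hI2_def .
      show "SAJ \<le> M * hJ2" using tot[OF sub(2)] unfolding SAJ_def AJ_def hJ2_def .
    qed
    have F6: "Qh = SAI + SD" "c * hI2 \<le> Qh"
    proof -
      have e1: "h i * hessI m A lam q xs i j * h j = (\<Sum>k<m. A k i * h i * (A k j * h j)) + (if i = j then D i * (h i)^2 else 0)" for i j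
        unfolding hessI_def D_def by (simp add: sum_distrib_left sum_distrib_right algebra_simps power2_eq_square)
      have "Qh = (\<Sum>i\<in>I. \<Sum>j\<in>I. \<Sum>k<m. A k i * h i * (A k j * h j)) + (\<Sum>i\<in>I. \<Sum>j\<in>I. if i = j then D i * (h i)^2 else 0)"
        unfolding Qh_def e1 by (simp add: sum.distrib)
      also have "(\<Sum>i\<in>I. \<Sum>j\<in>I. if i = j then D i * (h i)^2 else 0) = SD"
        unfolding SD_def using finI by simp
      also have "(\<Sum>i\<in>I. \<Sum>j\<in>I. \<Sum>k<m. A k i * h i * (A k j * h j)) = (\<Sum>k<m. \<Sum>i\<in>I. \<Sum>j\<in>I. A k i * h i * (A k j * h j))"
        by (simp add: sum.swap[of _ "{..<m}"])
      also have "\<dots> = SAI" unfolding SAI_def AI_def by (simp add: power2_eq_square sum_product)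
      finally show "Qh = SAI + SD" by simp
      show "c * hI2 \<le> Qh" unfolding hI2_def Qh_def by (rule cQ)
    qed
    have F7: "0 \<le> SJ - C * hJ2" "(\<exists>j\<in>J. h j \<noteq> 0) \<Longrightarrow> 0 < SJ - C * hJ2"
    proof -
      have eq: "SJ - C * hJ2 = (\<Sum>j\<in>J. g j * h j + lam * \<bar>h j\<bar> powr q - C * (h j)^2)"
        unfolding SJ_def hJ2_def by (simp add: sum_subtractf sum_distrib_left)
      have pos: "0 < g j * h j + lam * \<bar>h j\<bar> powr q - C * (h j)^2" if "j \<in> J" "h j \<noteq> 0" for j
      proof -
        have jN: "j < N" using that J_def by auto
        have hb: "\<bar>h j\<bar> < min 1 ((lam/(G+C)) powr (1/(1-q)))" using hsmall[OF jN] ddJ unfolding dJ_def by linarith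
        have gc: "G + C > 0" "0 \<le> C" using G0 C0 by auto
        show ?thesis by (rule Jterm[OF lam q0 q1 gG[OF jN] gc hb that(2)])
      qed
      have nn: "0 \<le> g j * h j + lam * \<bar>h j\<bar> powr q - C * (h j)^2" if "j \<in> J" for j
        using pos[OF that] by (cases "h j = 0") auto
      show "0 \<le> SJ - C * hJ2" unfolding eq by (intro sum_nonneg nn)
      assume "\<exists>j\<in>J. h j \<noteq> 0"
      then obtain j where "j \<in> J" "h j \<noteq> 0" by blast
      thus "0 < SJ - C * hJ2" unfolding eq using finJ nn pos by (intro sum_pos2[of J j]) auto
    qed
    have F8: "0 \<le> hI2" "(\<exists>i\<in>I. h i \<noteq> 0) \<Longrightarrow> 0 < hI2"
    proof -
      show "0 \<le> hI2" unfolding hI2_def by (simp add: sum_nonneg)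
      assume "\<exists>i\<in>I. h i \<noteq> 0"
      then obtain i where "i \<in> I" "h i \<noteq> 0" by blast
      thus "0 < hI2" unfolding hI2_def using finI by (intro sum_pos2[of I i]) auto
    qed
    have hI20: "0 \<le> hI2" "0 \<le> hJ2" unfolding hI2_def hJ2_def by (simp_all add: sum_nonneg)
    have n1: "th * SAI \<le> c/2 * hI2"
    proof -
      have "th * SAI \<le> th * (M * hI2)" using F5(1) th0 by (intro mult_left_mono) auto
      also have "\<dots> = c/2 * hI2" unfolding th_def using M0 by simp
      finally show ?thesis .
    qed
    have n2: "SAJ/th \<le> 2 * C * hJ2"
    proof -
      have "SAJ/th \<le> (M * hJ2)/th" using F5(2) th0 by (intro divide_right_mono) auto
      also have "\<dots> = 2 * C * hJ2" unfolding th_def C_def using M0 c0 by (simp add: field_simps power2_eq_square)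
      finally show ?thesis .
    qed
    have main: "c/8 * hI2 + (SJ - C * hJ2) \<le> Tlam m N A y lam q x - Tlam m N A y lam q xs"
      using F1 F2 F3 F4 F6 n1 n2 by linarith
    have "\<exists>i<N. h i \<noteq> 0" using xa unfolding h_def by auto
    hence "(\<exists>j\<in>J. h j \<noteq> 0) \<or> (\<exists>i\<in>I. h i \<noteq> 0)" using IJ(1) by auto
    hence "0 < c/8 * hI2 + (SJ - C * hJ2)"
    proof
      assume "\<exists>j\<in>J. h j \<noteq> 0"
      thus ?thesis using F7(2) F8(1) c0 by (simp add: add_nonneg_pos)
    next
      assume "\<exists>i\<in>I. h i \<noteq> 0"
      thus ?thesis using F7(1) F8(2) c0 by (simp add: add_pos_nonneg)
    qed
    thus "Tlam m N A y lam q xs < Tlam m N A y lam q x" using main by linarith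
  qed
qed



theorem theorem5:
  fixes m N :: nat and A :: "nat \<Rightarrow> nat \<Rightarrow> real" and y x0 xs :: "nat \<Rightarrow> real"
    and lam q mu :: real
  assumes "N > 0" and "lam > 0" and "0 < q" and "q < 1"
    and "0 < mu" and "mu * Lmax m N A < 1"
    and "\<forall>i<N. (\<lambda>n. gaita m N A y mu lam q x0 n i) \<longlonglongrightarrow> xs i"
    and "pos_def_on (supp N xs) (hessI m A lam q xs)"
  shows "strict_local_min N (Tlam m N A y lam q) xs"
proof -
  have stat: "\<forall>i\<in>supp N xs. (\<Sum>k<m. A k i * ((\<Sum>j<N. A k j * xs j) - y k)) + lam * q * sgn (xs i) * \<bar>xs i\<bar> powr (q-1) = 0"
    using stationarity[OF assms(1,2,3,4,5,7)] unfolding supp_def by auto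
  show ?thesis by (rule core[OF assms(2,3,4) stat assms(8)])
qed

end
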